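(* $\mathrm{Log}_{>1}(\mathbb{R})$ does not have the finite model property: there is a modal formula that is not in $\mathrm{Log}_{>1}(\mathbb{R})$ but is valid in every finite frame in which all formulas of $\mathrm{Log}_{>1}(\mathbb{R})$ are valid.
   Context: Modal formulas are built from a countable set of propositional variables using $\bot$, $\to$ and one unary modality $\lozenge$. A frame is a pair $(X,R)$; a valuation assigns subsets of $X$ to variables; $x\models\lozenge\varphi$ iff there is $y$ with $xRy$ and $y\models\varphi$. A formula is valid in a frame if true at every point under every valuation. $\mathrm{Log}_{>1}(\mathbb{R})$ is the set of formulas valid in the frame $(\mathbb{R},R_{>1})$ with $xR_{>1}y$ iff $|x-y|>1$. A logic $L$ has the finite model property if it is the set of formulas valid in some class of finite frames (equivalently, in the class of all finite frames validating $L$). *)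

theory Defs
  imports Complex_Main
begin

datatype fm = Var nat | Bot | Imp fm fm | Dia fm

fun sat :: "'a set \<Rightarrow> ('a \<Rightarrow> 'a \<Rightarrow> bool) \<Rightarrow> (nat \<Rightarrow> 'a set) \<Rightarrow> 'a \<Rightarrow> fm \<Rightarrow> bool" where
  "sat W R V x (Var n) = (x \<in> V n)"
| "sat W R V x Bot = False"
| "sat W R V x (Imp p q) = (sat W R V x p \<longrightarrow> sat W R V x q)"
| "sat W R V x (Dia p) = (\<exists>y\<in>W. R x y \<and> sat W R V y p)"

definition valid_in :: "'a set \<Rightarrow> ('a \<Rightarrow> 'a \<Rightarrow> bool) \<Rightarrow> fm \<Rightarrow> bool" where
  "valid_in W R p \<longleftrightarrow> (\<forall>V. (\<forall>n. V n \<subseteq> W) \<longrightarrow> (\<forall>x\<in>W. sat W R V x p))"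

definition R_gt1 :: "real \<Rightarrow> real \<Rightarrow> bool" where
  "R_gt1 x y \<longleftrightarrow> \<bar>x - y\<bar> > 1"

definition Log_gt1_R :: "fm set" where
  "Log_gt1_R = {p. valid_in (UNIV :: real set) R_gt1 p}"

end

theory Submission
  imports Defs
begin


definition mneg :: "fm \<Rightarrow> fm" where "mneg f = Imp f Bot"
definition mbox :: "fm \<Rightarrow> fm" where "mbox f = mneg (Dia (mneg f))"
definition mconj :: "fm \<Rightarrow> fm \<Rightarrow> fm" where "mconj f g = mneg (Imp f (mneg g))"
definition miff :: "fm \<Rightarrow> fm \<Rightarrow> fm" where "miff f g = mconj (Imp f g) (Imp g f)"
definition Gf :: "fm \<Rightarrow> fm \<Rightarrow> fm" where
  "Gf f g = mconj (mbox (Dia (mconj (Dia f) (mbox (mneg g))))) (mneg (mconj (Dia f) (mbox (mneg g))))"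

fun xseq :: "nat \<Rightarrow> fm" where
  "xseq 0 = Gf (Var 0) (Var 1)"
| "xseq (Suc 0) = Gf (Var 1) (Var 0)"
| "xseq (Suc (Suc n)) = Gf (xseq n) (xseq (Suc n))"

definition Shape :: fm where
  "Shape = mconj (mconj (mconj (mbox (mbox (miff (Var 0) (mbox (mneg (Var 0))))))
                               (mbox (mbox (miff (Var 1) (mbox (mneg (Var 1)))))))
                        (Dia (Dia (xseq 0))))
                 (mneg (Dia (Dia (mconj (xseq 0) (xseq 1)))))"

definition theta :: "nat \<Rightarrow> nat \<Rightarrow> fm" where
  "theta j k = Imp Shape (mneg (mbox (mbox (miff (xseq j) (xseq k)))))"

lemma sat_mneg[simp]: "sat W R V x (mneg f) = (\<not> sat W R V x f)"
  by (simp add: mneg_def)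
lemma sat_mbox[simp]: "sat W R V x (mbox f) = (\<forall>y\<in>W. R x y \<longrightarrow> sat W R V y f)"
  by (auto simp add: mbox_def)
lemma sat_mconj[simp]: "sat W R V x (mconj f g) = (sat W R V x f \<and> sat W R V x g)"
  by (auto simp add: mconj_def)
lemma sat_miff[simp]: "sat W R V x (miff f g) = (sat W R V x f = sat W R V x g)"
  by (auto simp add: miff_def)

definition Phi :: "real set \<Rightarrow> real set" where
  "Phi A = {x. \<forall>y\<in>A. \<bar>x - y\<bar> \<le> 1}"

definition Gs :: "real set \<Rightarrow> real set \<Rightarrow> real set" where
  "Gs A B = Phi (Phi (Phi B - Phi A)) - (Phi B - Phi A)"

abbreviation ext :: "(nat \<Rightarrow> real set) \<Rightarrow> fm \<Rightarrow> real set" where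
  "ext V f \<equiv> {x. sat UNIV R_gt1 V x f}"

lemma ext_Dia: "ext V (Dia f) = - Phi (ext V f)"
  unfolding Phi_def R_gt1_def by (auto simp add: not_le[symmetric])
lemma ext_boxneg: "ext V (mbox (mneg f)) = Phi (ext V f)"
  unfolding Phi_def R_gt1_def by (auto simp add: not_le[symmetric])
lemma ext_Gf: "ext V (Gf f g) = Gs (ext V f) (ext V g)"
proof -
  have e1: "ext V (mconj (Dia f) (mbox (mneg g))) = Phi (ext V g) - Phi (ext V f)"
    using ext_Dia[of V f] ext_boxneg[of V g] by auto
  have e2: "ext V (mbox (Dia h)) = Phi (Phi (ext V h))" for h
    using ext_Dia[of V h] unfolding Phi_def R_gt1_def by (auto simp add: not_le[symmetric])
  show ?thesis unfolding Gf_def Gs_def using e1 e2[of "mconj (Dia f) (mbox (mneg g))"]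
    by auto
qed

lemma far: "R_gt1 x (max x y + 2) \<and> R_gt1 (max x y + 2) y"
  by (auto simp add: R_gt1_def)

lemma sat_UU: "sat UNIV R_gt1 V x (mbox (mbox f)) = (\<forall>y. sat UNIV R_gt1 V y f)"
  using far by auto
lemma sat_EE: "sat UNIV R_gt1 V x (Dia (Dia f)) = (\<exists>y. sat UNIV R_gt1 V y f)"
  using far by auto

lemma Phi_Icc: assumes "a \<le> b" shows "Phi {a..b} = {b-1..a+1}"
proof (rule set_eqI, rule iffI)
  fix x assume "x \<in> Phi {a..b}"
  then have "\<bar>x-a\<bar> \<le> 1" "\<bar>x-b\<bar> \<le> 1" using assms by (auto simp: Phi_def)
  then show "x \<in> {b-1..a+1}" by auto
next
  fix x assume "x \<in> {b-1..a+1}" then show "x \<in> Phi {a..b}" by (auto simp add: Phi_def abs_le_iff)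
qed

lemma Phi_Ioc: assumes "a < b" shows "Phi {a<..b} = {b-1..a+1}"
proof (rule set_eqI)
  fix x
  show "x \<in> Phi {a<..b} \<longleftrightarrow> x \<in> {b-1..a+1}"
  proof
    assume h: "x \<in> Phi {a<..b}"
    have "\<bar>x - b\<bar> \<le> 1" using h assms by (auto simp add: Phi_def)
    then have "b - 1 \<le> x" by auto
    moreover have "x \<le> a + 1"
    proof (rule ccontr)
      assume "\<not> x \<le> a + 1"
      define y where "y = min b ((a + x - 1)/2)"
      have "y \<in> {a<..b}" using assms \<open>\<not> x \<le> a + 1\<close> by (auto simp add: y_def)
      moreover have "x - y > 1"
      proof -
        have "y \<le> (a + x - 1)/2" unfolding y_def by (rule min.cobounded2)
        then show ?thesis using \<open>\<not> x \<le> a + 1\<close> by (simp add: field_simps)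
      qed
      ultimately show False using h by (force simp add: Phi_def)
    qed
    ultimately show "x \<in> {b-1..a+1}" by auto
  next
    assume "x \<in> {b-1..a+1}" then show "x \<in> Phi {a<..b}" by (auto simp add: Phi_def abs_le_iff)
  qed
qed

lemma Phi_Ico: assumes "a < b" shows "Phi {a..<b} = {b-1..a+1}"
proof (rule set_eqI)
  fix x
  show "x \<in> Phi {a..<b} \<longleftrightarrow> x \<in> {b-1..a+1}"
  proof
    assume h: "x \<in> Phi {a..<b}"
    have "\<bar>x - a\<bar> \<le> 1" using h assms by (auto simp add: Phi_def)
    then have "x \<le> a + 1" by auto
    moreover have "b - 1 \<le> x"
    proof (rule ccontr)
      assume "\<not> b - 1 \<le> x"
      define y where "y = max a ((b + x + 1)/2)"
      have "y \<in> {a..<b}" using assms \<open>\<not> b - 1 \<le> x\<close> by (auto simp add: y_def)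
      moreover have "y - x > 1"
      proof -
        have "y \<ge> (b + x + 1)/2" unfolding y_def by (rule max.cobounded2)
        then show ?thesis using \<open>\<not> b - 1 \<le> x\<close> by (simp add: field_simps)
      qed
      ultimately show False using h by (force simp add: Phi_def)
    qed
    ultimately show "x \<in> {b-1..a+1}" by auto
  next
    assume "x \<in> {b-1..a+1}" then show "x \<in> Phi {a..<b}" by (auto simp add: Phi_def abs_le_iff)
  qed
qed

lemma Phi_empty: "Phi {} = UNIV" by (simp add: Phi_def)
lemma Phi_UNIV: "Phi UNIV = {}"
proof -
  have "x \<notin> Phi UNIV" for x by (auto simp add: Phi_def intro!: exI[of _ "x+2"])
  then show ?thesis by auto
qed



lemma Gs_single:
  assumes s: "s = 1 \<or> s = -1" and h1: "0 < s*(v-u)" and h2: "s*(v-u) < 1"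
  shows "Gs {u} {v} = {u+s}"
  using s
proof
  assume s1: "s = 1"
  then have uv: "u < v" "v < u + 1" using h1 h2 by auto
  have "Phi {v} = {v-1..v+1}" using Phi_Icc[of v v] by simp
  moreover have "Phi {u} = {u-1..u+1}" using Phi_Icc[of u u] by simp
  ultimately have D: "Phi {v} - Phi {u} = {u+1<..v+1}" using uv by auto
  have "Phi {u+1<..v+1} = {v..u+2}" using Phi_Ioc[of "u+1" "v+1"] uv by simp
  moreover have "Phi {v..u+2} = {u+1..v+1}" using Phi_Icc[of v "u+2"] uv by simp
  ultimately show ?thesis unfolding Gs_def D using s1 uv by auto
next
  assume s1: "s = -1"
  then have uv: "v < u" "u < v + 1" using h1 h2 by auto
  have "Phi {v} = {v-1..v+1}" using Phi_Icc[of v v] by simp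
  moreover have "Phi {u} = {u-1..u+1}" using Phi_Icc[of u u] by simp
  ultimately have D: "Phi {v} - Phi {u} = {v-1..<u-1}" using uv by auto
  have "Phi {v-1..<u-1} = {u-2..v}" using Phi_Ico[of "v-1" "u-1"] uv by simp
  moreover have "Phi {u-2..v} = {v-1..u-1}" using Phi_Icc[of "u-2" v] uv by simp
  ultimately show ?thesis unfolding Gs_def D using s1 uv by auto
qed

lemma Gs_start:
  "Gs {a..a+1} {c..c+1} =
    (if 0 < c-a \<and> c-a \<le> 1 then {a+1} else if -1 \<le> c-a \<and> c-a < 0 then {a} else {})"
proof -
  have PA: "Phi {a..a+1} = {a..a+1}" using Phi_Icc[of a "a+1"] by simp
  have PC: "Phi {c..c+1} = {c..c+1}" using Phi_Icc[of c "c+1"] by simp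
  consider "0 < c-a \<and> c-a \<le> 1" | "-1 \<le> c-a \<and> c-a < 0" | "c = a" | "\<bar>c - a\<bar> > 1"
    by linarith
  then show ?thesis
  proof cases
    case 1
    have D: "{c..c+1} - {a..a+1} = {a+1<..c+1}" using 1 by auto
    have "Phi {a+1<..c+1} = {c..a+2}" using Phi_Ioc[of "a+1" "c+1"] 1 by simp
    moreover have "Phi {c..a+2} = {a+1..c+1}" using Phi_Icc[of c "a+2"] 1 by simp
    ultimately show ?thesis unfolding Gs_def PA PC D using 1 by auto
  next
    case 2
    have D: "{c..c+1} - {a..a+1} = {c..<a}" using 2 by auto
    have "Phi {c..<a} = {a-1..c+1}" using Phi_Ico[of c a] 2 by simp
    moreover have "Phi {a-1..c+1} = {c..a}" using Phi_Icc[of "a-1" "c+1"] 2 by simp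
    ultimately show ?thesis unfolding Gs_def PA PC D using 2 by auto
  next
    case 3
    then show ?thesis unfolding Gs_def PA PC by (simp add: Phi_empty Phi_UNIV)
  next
    case 4
    have D: "{c..c+1} - {a..a+1} = {c..c+1}" using 4 by auto
    have n: "\<not> (0 < c-a \<and> c-a \<le> 1)" "\<not> (-1 \<le> c-a \<and> c-a < 0)" using 4 by (cases "c \<ge> a"; auto)+
    show ?thesis unfolding Gs_def PA PC D using n by (simp add: PC)
  qed
qed

lemma Phi_fix:
  assumes "S = Phi S" shows "\<exists>a. S = {a..a+1}"
proof -
  have ne: "S \<noteq> {}" using assms Phi_empty by auto
  then obtain s where s: "s \<in> S" by auto
  have bd: "\<forall>y\<in>S. \<bar>y - s\<bar> \<le> 1" using s assms by (metis (no_types, lifting) Phi_def mem_Collect_eq)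
  have bb1: "bdd_below S" by (rule bdd_belowI[of _ "s-1"]) (use bd in \<open>auto simp: abs_le_iff\<close>)
  have bb2: "bdd_above S" by (rule bdd_aboveI[of _ "s+1"]) (use bd in \<open>auto simp: abs_le_iff\<close>)
  note bb = bb1 bb2
  define a where "a = Inf S"
  define b where "b = Sup S"
  have key: "Phi S = {b-1..a+1}"
  proof (rule set_eqI)
    fix x
    have "x \<in> Phi S \<longleftrightarrow> (\<forall>y\<in>S. x - 1 \<le> y \<and> y \<le> x + 1)" by (auto simp: Phi_def abs_le_iff)
    also have "\<dots> \<longleftrightarrow> x - 1 \<le> a \<and> b \<le> x + 1"
    proof
      assume "\<forall>y\<in>S. x - 1 \<le> y \<and> y \<le> x + 1"
      then show "x - 1 \<le> a \<and> b \<le> x + 1" unfolding a_def b_def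
        using ne by (auto intro: cInf_greatest cSup_least)
    next
      assume "x - 1 \<le> a \<and> b \<le> x + 1"
      then show "\<forall>y\<in>S. x - 1 \<le> y \<and> y \<le> x + 1" unfolding a_def b_def
        using bb by (meson cInf_lower cSup_upper order_trans)
    qed
    finally show "x \<in> Phi S \<longleftrightarrow> x \<in> {b-1..a+1}" by auto
  qed
  have SS: "S = {b-1..a+1}" using assms key by simp
  have le: "b - 1 \<le> a + 1" using SS ne by auto
  have "a = b - 1" using SS le unfolding a_def by (metis cInf_atLeastAtMost)
  then have "S = {a..a+1}" using SS by simp
  then show ?thesis by blast
qed


lemma sat_boxneg_R: "sat UNIV R_gt1 V y (mbox (mneg f)) \<longleftrightarrow> y \<in> Phi (ext V f)"
  using ext_boxneg[of V f] by blast
lemma ext_xseq0: "ext V (xseq 0) = Gs (V 0) (V 1)" by (simp add: ext_Gf)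
lemma ext_xseq1: "ext V (xseq (Suc 0)) = Gs (V 1) (V 0)" by (simp add: ext_Gf)
lemma ext_xseqSS: "ext V (xseq (Suc (Suc n))) = Gs (ext V (xseq n)) (ext V (xseq (Suc n)))"
  by (simp add: ext_Gf)

lemma sat_Shape_R:
  "sat UNIV R_gt1 V x Shape \<longleftrightarrow>
     V 0 = Phi (V 0) \<and> V 1 = Phi (V 1) \<and> ext V (xseq 0) \<noteq> {} \<and>
     ext V (xseq 0) \<inter> ext V (xseq (Suc 0)) = {}"
proof -
  have e0: "(\<forall>y. sat UNIV R_gt1 V y (miff (Var i) (mbox (mneg (Var i))))) \<longleftrightarrow> V i = Phi (V i)" for i
  proof -
    have "(\<forall>y. sat UNIV R_gt1 V y (miff (Var i) (mbox (mneg (Var i))))) \<longleftrightarrow> (\<forall>y. (y \<in> V i) = (y \<in> Phi (V i)))"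
      by (simp only: sat_miff sat_boxneg_R sat.simps) simp
    also have "\<dots> \<longleftrightarrow> V i = Phi (V i)" by blast
    finally show ?thesis .
  qed
  have e1: "(\<exists>y. sat UNIV R_gt1 V y f) \<longleftrightarrow> ext V f \<noteq> {}" for f by blast
  have e2: "(\<not>(\<exists>y. sat UNIV R_gt1 V y f \<and> sat UNIV R_gt1 V y g)) \<longleftrightarrow> ext V f \<inter> ext V g = {}" for f g by auto
  show ?thesis unfolding Shape_def
    by (simp only: sat_mconj sat_mneg sat_UU sat_EE e0 e1 e2 One_nat_def conj_assoc)
qed

fun wseq :: "real \<Rightarrow> real \<Rightarrow> real \<Rightarrow> nat \<Rightarrow> real" where
  "wseq u v s 0 = u"
| "wseq u v s (Suc 0) = v"
| "wseq u v s (Suc (Suc n)) = wseq u v s n + s"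

lemma seq_R:
  assumes e0: "ext V (xseq 0) = {u}" and e1: "ext V (xseq (Suc 0)) = {v}"
    and s: "s = 1 \<or> s = -1" and h1: "0 < s*(v-u)" and h2: "s*(v-u) < 1"
  shows "ext V (xseq n) = {wseq u v s n} \<and> ext V (xseq (Suc n)) = {wseq u v s (Suc n)} \<and>
         0 < s*(wseq u v s (Suc n) - wseq u v s n) \<and> s*(wseq u v s (Suc n) - wseq u v s n) < 1"
proof (induction n)
  case 0
  then show ?case using e0 e1 h1 h2 by simp
next
  case (Suc n)
  let ?w = "wseq u v s"
  have ss: "s * s = 1" using s by auto
  have "ext V (xseq (Suc (Suc n))) = Gs {?w n} {?w (Suc n)}"
    using Suc.IH by (simp only: ext_xseqSS)
  also have "\<dots> = {?w n + s}" using Gs_single[OF s] Suc.IH by blast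
  finally have A: "ext V (xseq (Suc (Suc n))) = {?w (Suc (Suc n))}" by simp
  have B: "s * (?w (Suc (Suc n)) - ?w (Suc n)) = 1 - s * (?w (Suc n) - ?w n)"
    using ss by (simp add: algebra_simps)
  show ?case using Suc.IH A B by simp
qed

lemma seq_R_inj:
  assumes e0: "ext V (xseq 0) = {u}" and e1: "ext V (xseq (Suc 0)) = {v}"
    and s: "s = 1 \<or> s = -1" and h1: "0 < s*(v-u)" and h2: "s*(v-u) < 1"
    and jk: "j \<noteq> k"
  shows "ext V (xseq j) \<noteq> ext V (xseq k)"
proof -
  have sm: "strict_mono (\<lambda>n. s * wseq u v s n)"
    unfolding strict_mono_Suc_iff
  proof
    fix n show "s * wseq u v s n < s * wseq u v s (Suc n)"
      using seq_R[OF e0 e1 s h1 h2, of n] by (simp add: algebra_simps)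
  qed
  then have "s * wseq u v s j \<noteq> s * wseq u v s k" using jk by (metis strict_mono_eq)
  then have "wseq u v s j \<noteq> wseq u v s k" by auto
  then show ?thesis using seq_R[OF e0 e1 s h1 h2, of j] seq_R[OF e0 e1 s h1 h2, of k] by auto
qed


lemma theta_Log: assumes "j \<noteq> k" shows "theta j k \<in> Log_gt1_R"
  unfolding Log_gt1_R_def valid_in_def
proof (intro CollectI allI impI ballI)
  fix V :: "nat \<Rightarrow> real set" and x :: real
  show "sat UNIV R_gt1 V x (theta j k)"
    unfolding theta_def
  proof (simp only: sat.simps sat_mneg sat_UU, intro impI notI)
    assume sh: "sat UNIV R_gt1 V x Shape"
    assume eq: "\<forall>y. sat UNIV R_gt1 V y (miff (xseq j) (xseq k))"
    from sh have f0: "V 0 = Phi (V 0)" and f1: "V 1 = Phi (V 1)"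
      and ne: "ext V (xseq 0) \<noteq> {}" and dj: "ext V (xseq 0) \<inter> ext V (xseq (Suc 0)) = {}"
      using sat_Shape_R by blast+
    obtain a where a: "V 0 = {a..a+1}" using Phi_fix[OF f0] by blast
    obtain c where c: "V 1 = {c..c+1}" using Phi_fix[OF f1] by blast
    have X0: "ext V (xseq 0) = (if 0 < c-a \<and> c-a \<le> 1 then {a+1} else if -1 \<le> c-a \<and> c-a < 0 then {a} else {})"
      using ext_xseq0[of V] Gs_start[of a c] a c by simp
    have X1: "ext V (xseq (Suc 0)) = (if 0 < a-c \<and> a-c \<le> 1 then {c+1} else if -1 \<le> a-c \<and> a-c < 0 then {c} else {})"
      using ext_xseq1[of V] Gs_start[of c a] a c by simp
    have neq: "ext V (xseq j) \<noteq> ext V (xseq k)"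
    proof (cases "0 < c-a \<and> c-a \<le> 1")
      case True
      then have x0: "ext V (xseq 0) = {a+1}" and x1: "ext V (xseq (Suc 0)) = {c}" using X0 X1 by auto
      then have "c \<noteq> a + 1" using dj by auto
      then show ?thesis using seq_R_inj[OF x0 x1, of "-1"] True \<open>j \<noteq> k\<close> by auto
    next
      case False
      then have F: "-1 \<le> c-a \<and> c-a < 0" using X0 ne by (auto split: if_splits)
      then have x0: "ext V (xseq 0) = {a}" and x1: "ext V (xseq (Suc 0)) = {c+1}" using X0 X1 by auto
      then have "c + 1 \<noteq> a" using dj by auto
      then show ?thesis using seq_R_inj[OF x0 x1, of "1"] F \<open>j \<noteq> k\<close> by auto
    qed
    moreover have "ext V (xseq j) = ext V (xseq k)" using eq by auto
    ultimately show False by blast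
  qed
qed


lemma not_Log: "mneg Shape \<notin> Log_gt1_R"
proof
  assume "mneg Shape \<in> Log_gt1_R"
  then have all: "\<And>V x. sat UNIV R_gt1 V x (mneg Shape)" unfolding Log_gt1_R_def valid_in_def by auto
  define V :: "nat \<Rightarrow> real set" where "V = (\<lambda>n. if n = 0 then {0..0+1} else {1/2..1/2+1})"
  have v0: "V 0 = {0..0+1}" and v1: "V 1 = {1/2..1/2+1}" by (simp_all add: V_def)
  have p0: "V 0 = Phi (V 0)" unfolding v0 using Phi_Icc[of 0 "0+1"] by simp
  have p1: "V 1 = Phi (V 1)" unfolding v1 using Phi_Icc[of "1/2" "1/2+1"] by simp
  have x0: "ext V (xseq 0) = {1}" unfolding ext_xseq0 v0 v1 Gs_start by simp
  have x1: "ext V (xseq (Suc 0)) = {1/2}" unfolding ext_xseq1 v0 v1 Gs_start by simp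
  have "sat UNIV R_gt1 V 0 Shape" unfolding sat_Shape_R using p0 p1 x0 x1 by simp
  then show False using all[of V 0] by simp
qed


lemma fin_side:
  fixes W :: "nat set" and R :: "nat \<Rightarrow> nat \<Rightarrow> bool"
  assumes fin: "finite W" and lg: "\<forall>q\<in>Log_gt1_R. valid_in W R q"
  shows "valid_in W R (mneg Shape)"
  unfolding valid_in_def
proof (intro allI impI ballI)
  fix V :: "nat \<Rightarrow> nat set" and x
  assume Vw: "\<forall>n. V n \<subseteq> W" and xW: "x \<in> W"
  show "sat W R V x (mneg Shape)"
  proof (simp only: sat_mneg, rule notI)
    assume sh: "sat W R V x Shape"
    define E where "E = (\<lambda>n. {y\<in>W. sat W R V y (xseq n)})"
    have rE: "range E \<subseteq> Pow W" unfolding E_def by auto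
    have fr: "finite (range E)" by (rule finite_subset[OF rE]) (simp add: fin)
    have ni: "\<not> inj E"
    proof
      assume "inj E"
      then have "finite (UNIV :: nat set)" using finite_imageD[of E UNIV] fr by simp
      then show False by simp
    qed
    then obtain j k where jk: "j \<noteq> k" and Ejk: "E j = E k" unfolding inj_def by auto
    have "valid_in W R (theta j k)" using lg theta_Log[OF jk] by blast
    then have th: "sat W R V x (theta j k)" using Vw xW unfolding valid_in_def by blast
    have bb: "sat W R V x (mbox (mbox (miff (xseq j) (xseq k))))"
    proof -
      have "\<forall>z\<in>W. sat W R V z (xseq j) = sat W R V z (xseq k)"
        using Ejk unfolding E_def by blast
      then show ?thesis by (simp only: sat_mbox sat_miff) blast
    qed
    from th have "sat W R V x Shape \<longrightarrow> \<not> sat W R V x (mbox (mbox (miff (xseq j) (xseq k))))"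
      unfolding theta_def by (simp only: sat.simps sat_mneg)
    then show False using bb sh by blast
  qed
qed


theorem theorem5p8:
  shows "\<exists>p. p \<notin> Log_gt1_R \<and>
    (\<forall>(W :: nat set) (R :: nat \<Rightarrow> nat \<Rightarrow> bool). finite W \<longrightarrow>
        (\<forall>q\<in>Log_gt1_R. valid_in W R q) \<longrightarrow> valid_in W R p)"
  using not_Log fin_side by blast

end
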